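(* Let $S\in(0,1)$, $f_S,f_C,h_S,h_C>0$ and $\lambda_S,\lambda_C>0$. Put $A_S=\lambda_S/f_S$ and $A_C=\lambda_C/h_C$. The planar system \[ SB'=f_S\,(SB+A_S)(S-SB)-h_S\,CR\cdot SB,\qquad CR'=f_C\,CR\,(1-S-CR)-h_C\,(SB+A_C)\,CR \] has no limit cycle (no nonconstant periodic orbit) contained in the open rectangle $(0,S)\times(0,1-S)$.
   Context: Armed-revolt model with direct foreign intervention on Blue's side. A population of total size $1$ is split into a fixed fraction $S$ of supporters of Blue and $1-S$ of contrarians. $SB$ and $CR$ are the fractions of the total population that are supporters controlled by Blue and contrarians controlled by Red. The remaining fractions are $SR=S-SB$ and $CB=1-S-CR$. The full dynamics are $SB'=f_S\,SB\cdot SR-h_S\,CR\cdot SB+\lambda_S\,SR$, $SR'=-SB'$, $CR'=f_C\,CR\cdot CB-h_C\,SB\cdot CR-\lambda_C\,CR$, $CB'=-CR'$. The constants $\lambda_S,\lambda_C$ are the combat powers of the foreign force. These dynamics reduce to the planar system in the claim. *)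

theory Defs
  imports "HOL-Analysis.Analysis"
begin

definition SB_rhs :: "real \<Rightarrow> real \<Rightarrow> real \<Rightarrow> real \<Rightarrow> real \<Rightarrow> real \<Rightarrow> real" where
  "SB_rhs S fS hS lamS sb cr = fS * (sb + lamS / fS) * (S - sb) - hS * cr * sb"

definition CR_rhs :: "real \<Rightarrow> real \<Rightarrow> real \<Rightarrow> real \<Rightarrow> real \<Rightarrow> real \<Rightarrow> real" where
  "CR_rhs S fC hC lamC sb cr = fC * cr * (1 - S - cr) - hC * (sb + lamC / hC) * cr"

definition is_solution ::
  "real \<Rightarrow> real \<Rightarrow> real \<Rightarrow> real \<Rightarrow> real \<Rightarrow> real \<Rightarrow> real \<Rightarrow>
   (real \<Rightarrow> real) \<Rightarrow> (real \<Rightarrow> real) \<Rightarrow> bool" where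
  "is_solution S fS fC hS hC lamS lamC sb cr \<longleftrightarrow>
     (\<forall>t. (sb has_real_derivative SB_rhs S fS hS lamS (sb t) (cr t)) (at t) \<and>
          (cr has_real_derivative CR_rhs S fC hC lamC (sb t) (cr t)) (at t))"

definition nonconstant_periodic_orbit ::
  "real \<Rightarrow> real \<Rightarrow> real \<Rightarrow> real \<Rightarrow> real \<Rightarrow> real \<Rightarrow> real \<Rightarrow>
   (real \<Rightarrow> real) \<Rightarrow> (real \<Rightarrow> real) \<Rightarrow> bool" where
  "nonconstant_periodic_orbit S fS fC hS hC lamS lamC sb cr \<longleftrightarrow>
     is_solution S fS fC hS hC lamS lamC sb cr \<and>
     (\<exists>T>0. \<forall>t. sb (t + T) = sb t \<and> cr (t + T) = cr t) \<and>
     (\<exists>t1 t2. (sb t1, cr t1) \<noteq> (sb t2, cr t2))"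

end

theory Submission
  imports Defs
begin

lemma rolle_zero:
  fixes f u :: "real \<Rightarrow> real"
  assumes "a < b" "f a = f b" "\<And>t. (f has_real_derivative u t) (at t)"
  shows "\<exists>z. a < z \<and> z < b \<and> u z = 0"
proof -
  have c: "continuous_on {a..b} f"
    using assms(3) by (meson DERIV_continuous continuous_at_imp_continuous_on)
  have "\<exists>z. a < z \<and> z < b \<and> (\<lambda>h. u z * h) = (\<lambda>v. 0)"
    by (rule Rolle_deriv[OF assms(1,2) c]) (use assms(3) in \<open>simp add: has_field_derivative_def\<close>)
  then obtain z where z: "a < z" "z < b" "(\<lambda>h. u z * h) = (\<lambda>v. 0)" by blast
  from z(3) have "u z * 1 = 0" by (rule fun_cong)
  then have "u z = 0" by simp
  with z(1,2) show ?thesis by blast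
qed

lemma gronwall_zero:
  fixes w w' :: "real \<Rightarrow> real"
  assumes D: "\<And>t. (w has_real_derivative w' t) (at t)"
    and B: "\<And>t. \<bar>w' t\<bar> \<le> K * w t" and P: "\<And>t. w t \<ge> 0" and Z: "w t1 = 0"
  shows "w t = 0"
proof (cases "t1 \<le> t")
  case True
  have "w t * exp (- K * t) \<le> w t1 * exp (- K * t1)"
  proof (rule DERIV_nonpos_imp_nonincreasing[OF True])
    fix s
    have "((\<lambda>s. w s * exp (- K * s)) has_real_derivative (w' s * exp (- K * s) + w s * (exp (- K * s) * (- K)))) (at s)"
      by (auto intro!: derivative_eq_intros D)
    moreover have "w' s * exp (- K * s) + w s * (exp (- K * s) * (- K)) = (w' s - K * w s) * exp (- K * s)"
      by (simp add: algebra_simps)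
    moreover have "(w' s - K * w s) * exp (- K * s) \<le> 0"
      using B[of s] by (intro mult_nonpos_nonneg) auto
    ultimately show "\<exists>y. ((\<lambda>s. w s * exp (- K * s)) has_real_derivative y) (at s) \<and> y \<le> 0" by auto
  qed
  then have "w t * exp (- K * t) \<le> 0" using Z by simp
  then have "w t \<le> 0" by (simp add: mult_le_0_iff)
  then show ?thesis using P[of t] by simp
next
  case False
  then have le: "t \<le> t1" by simp
  have "w t * exp (K * t) \<le> w t1 * exp (K * t1)"
  proof (rule DERIV_nonneg_imp_nondecreasing[OF le])
    fix s
    have "((\<lambda>s. w s * exp (K * s)) has_real_derivative (w' s * exp (K * s) + w s * (exp (K * s) * K))) (at s)"
      by (auto intro!: derivative_eq_intros D)
    moreover have "w' s * exp (K * s) + w s * (exp (K * s) * K) = (w' s + K * w s) * exp (K * s)"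
      by (simp add: algebra_simps)
    moreover have "(w' s + K * w s) * exp (K * s) \<ge> 0"
      using B[of s] by (intro mult_nonneg_nonneg) auto
    ultimately show "\<exists>y. ((\<lambda>s. w s * exp (K * s)) has_real_derivative y) (at s) \<and> y \<ge> 0" by auto
  qed
  then have "w t * exp (K * t) \<le> 0" using Z by simp
  then have "w t \<le> 0" by (simp add: mult_le_0_iff)
  then show ?thesis using P[of t] by simp
qed

lemma neg_stays:
  fixes p p' :: "real \<Rightarrow> real"
  assumes D: "\<And>t. (p has_real_derivative p' t) (at t)"
    and N: "\<And>t. p t = 0 \<Longrightarrow> p' t < 0" and n0: "p t0 < 0" and le: "t0 \<le> t2"
  shows "p t2 < 0"
proof (rule ccontr)
  assume "\<not> p t2 < 0"
  then have ge: "p t2 \<ge> 0" by simp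
  have cont: "\<And>t. isCont p t" using D DERIV_isCont by blast
  define Z where "Z = {s \<in> {t0..t2}. p s = 0}"
  obtain z0 where z0: "t0 \<le> z0" "z0 \<le> t2" "p z0 = 0"
    using IVT[of p t0 0 t2] n0 ge le cont by auto
  have ne: "Z \<noteq> {}" using z0 unfolding Z_def by auto
  have clo: "closed Z" unfolding Z_def
    using continuous_closed_preimage_constant[of "{t0..t2}" p 0]
    by (simp add: continuous_at_imp_continuous_on cont)
  have bdd: "bdd_below Z" unfolding Z_def by (auto intro: bdd_belowI[of _ t0])
  define s where "s = Inf Z"
  have sZ: "s \<in> Z" unfolding s_def using closed_contains_Inf[OF ne bdd clo] .
  then have ps: "p s = 0" and st0: "t0 \<le> s" unfolding Z_def by auto
  have "s \<noteq> t0" using ps n0 by auto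
  with st0 have st0': "t0 < s" by simp
  obtain d where d: "d > 0" "\<And>h. h > 0 \<Longrightarrow> h < d \<Longrightarrow> p s < p (s - h)"
    using DERIV_neg_dec_left[OF D N[OF ps]] by blast
  define h where "h = min (d/2) ((s - t0)/2)"
  have h1: "h \<le> (s - t0)/2" "h \<le> d/2" unfolding h_def by (rule min.cobounded2, rule min.cobounded1)
  have h: "h > 0" "h < d" "s - h \<ge> t0" using d st0' h1 unfolding h_def by auto
  have "p (s - h) > 0" using d(2)[OF h(1,2)] ps by simp
  then obtain z1 where z1: "t0 \<le> z1" "z1 \<le> s - h" "p z1 = 0"
    using IVT[of p t0 0 "s - h"] n0 h cont by auto
  have "z1 \<in> Z" using z1 sZ h unfolding Z_def by auto
  then have "s \<le> z1" unfolding s_def using bdd by (simp add: cInf_lower)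
  then show False using z1 h by simp
qed

lemma quad_bound:
  fixes a b c d u v A :: real
  assumes "\<bar>a\<bar> + \<bar>b\<bar> + \<bar>c\<bar> + \<bar>d\<bar> \<le> A"
  shows "\<bar>2 * (a * u\<^sup>2 + (b + c) * u * v + d * v\<^sup>2)\<bar> \<le> 2 * A * (u\<^sup>2 + v\<^sup>2)"
proof -
  have "0 \<le> (\<bar>u\<bar> - \<bar>v\<bar>)\<^sup>2" by simp
  then have "2 * (\<bar>u\<bar> * \<bar>v\<bar>) \<le> \<bar>u\<bar>\<^sup>2 + \<bar>v\<bar>\<^sup>2" by (simp add: power2_diff)
  then have A: "2 * (\<bar>u\<bar> * \<bar>v\<bar>) \<le> u\<^sup>2 + v\<^sup>2" by simp
  have B: "0 \<le> \<bar>u\<bar> * \<bar>v\<bar>" by simp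
  from A B have "\<bar>u\<bar> * \<bar>v\<bar> \<le> u\<^sup>2 + v\<^sup>2" by linarith
  then have uv: "\<bar>u * v\<bar> \<le> u\<^sup>2 + v\<^sup>2" by (simp add: abs_mult)
  have t1: "\<bar>a * u\<^sup>2\<bar> = \<bar>a\<bar> * u\<^sup>2" by (simp add: abs_mult)
  have t2: "\<bar>(b + c) * u * v\<bar> \<le> (\<bar>b\<bar> + \<bar>c\<bar>) * \<bar>u * v\<bar>"
    by (simp add: abs_mult mult.assoc mult_right_mono abs_triangle_ineq)
  have t3: "\<bar>d * v\<^sup>2\<bar> = \<bar>d\<bar> * v\<^sup>2" by (simp add: abs_mult)
  have "\<bar>a * u\<^sup>2 + (b + c) * u * v + d * v\<^sup>2\<bar> \<le> \<bar>a * u\<^sup>2\<bar> + \<bar>(b + c) * u * v\<bar> + \<bar>d * v\<^sup>2\<bar>"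
    by (rule order_trans[OF abs_triangle_ineq add_mono[OF abs_triangle_ineq order_refl]])
  also have "\<dots> \<le> \<bar>a\<bar> * u\<^sup>2 + (\<bar>b\<bar> + \<bar>c\<bar>) * \<bar>u * v\<bar> + \<bar>d\<bar> * v\<^sup>2"
    using t1 t2 t3 by linarith
  also have "\<dots> \<le> \<bar>a\<bar> * (u\<^sup>2 + v\<^sup>2) + (\<bar>b\<bar> + \<bar>c\<bar>) * (u\<^sup>2 + v\<^sup>2) + \<bar>d\<bar> * (u\<^sup>2 + v\<^sup>2)"
    by (intro add_mono mult_left_mono uv) auto
  also have "\<dots> = (\<bar>a\<bar> + \<bar>b\<bar> + \<bar>c\<bar> + \<bar>d\<bar>) * (u\<^sup>2 + v\<^sup>2)" by (simp add: algebra_simps)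
  also have "\<dots> \<le> A * (u\<^sup>2 + v\<^sup>2)" by (intro mult_right_mono assms) auto
  finally show ?thesis by simp
qed

theorem proposition2:
  fixes S fS fC hS hC lamS lamC :: real
    and sb cr :: "real \<Rightarrow> real"
  assumes "0 < S" "S < 1"
    and "fS > 0" "fC > 0" "hS > 0" "hC > 0" "lamS > 0" "lamC > 0"
  shows "\<not> (nonconstant_periodic_orbit S fS fC hS hC lamS lamC sb cr \<and>
            (\<forall>t. 0 < sb t \<and> sb t < S \<and> 0 < cr t \<and> cr t < 1 - S))"
proof
  assume H: "nonconstant_periodic_orbit S fS fC hS hC lamS lamC sb cr \<and>
            (\<forall>t. 0 < sb t \<and> sb t < S \<and> 0 < cr t \<and> cr t < 1 - S)"
  have box: "\<And>t. 0 < sb t" "\<And>t. sb t < S" "\<And>t. 0 < cr t" "\<And>t. cr t < 1 - S"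
    using H by auto
  have sol: "is_solution S fS fC hS hC lamS lamC sb cr"
    using H unfolding nonconstant_periodic_orbit_def by blast
  obtain T where T: "T > 0" "\<And>t. sb (t + T) = sb t" "\<And>t. cr (t + T) = cr t"
    using H unfolding nonconstant_periodic_orbit_def by blast
  obtain t1' t2' where nc: "(sb t1', cr t1') \<noteq> (sb t2', cr t2')"
    using H unfolding nonconstant_periodic_orbit_def by blast
  define u where "u t = SB_rhs S fS hS lamS (sb t) (cr t)" for t
  define v where "v t = CR_rhs S fC hC lamC (sb t) (cr t)" for t
  define a where "a t = fS*(S - sb t) - fS*(sb t + lamS/fS) - hS * cr t" for t
  define b where "b t = - hS * sb t" for t
  define c where "c t = - hC * cr t" for t
  define d where "d t = fC*(1 - S - cr t) - fC * cr t - hC*(sb t + lamC/hC)" for t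
  have Dx: "\<And>t. (sb has_real_derivative u t) (at t)"
    using sol unfolding is_solution_def u_def by blast
  have Dy: "\<And>t. (cr has_real_derivative v t) (at t)"
    using sol unfolding is_solution_def v_def by blast
  have Du: "\<And>t. (u has_real_derivative (a t * u t + b t * v t)) (at t)"
  proof -
    fix t
    have "((\<lambda>t. fS * (sb t + lamS / fS) * (S - sb t) - hS * cr t * sb t) has_real_derivative
       (fS * (u t) * (S - sb t) + fS * (sb t + lamS / fS) * (- u t) - (hS * v t * sb t + hS * cr t * u t))) (at t)"
      by (auto intro!: derivative_eq_intros Dx Dy simp: algebra_simps)
    moreover have "fS * (u t) * (S - sb t) + fS * (sb t + lamS / fS) * (- u t) - (hS * v t * sb t + hS * cr t * u t)
       = a t * u t + b t * v t" unfolding a_def b_def by (simp add: algebra_simps)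
    ultimately show "(u has_real_derivative (a t * u t + b t * v t)) (at t)"
      unfolding u_def[abs_def] SB_rhs_def by simp
  qed
  have Dv: "\<And>t. (v has_real_derivative (c t * u t + d t * v t)) (at t)"
  proof -
    fix t
    have "((\<lambda>t. fC * cr t * (1 - S - cr t) - hC * (sb t + lamC / hC) * cr t) has_real_derivative
       (fC * v t * (1 - S - cr t) + fC * cr t * (- v t) - (hC * u t * cr t + hC * (sb t + lamC / hC) * v t))) (at t)"
      by (auto intro!: derivative_eq_intros Dx Dy simp: algebra_simps)
    moreover have "fC * v t * (1 - S - cr t) + fC * cr t * (- v t) - (hC * u t * cr t + hC * (sb t + lamC / hC) * v t)
       = c t * u t + d t * v t" unfolding c_def d_def by (simp add: algebra_simps)
    ultimately show "(v has_real_derivative (c t * u t + d t * v t)) (at t)"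
      unfolding v_def[abs_def] CR_rhs_def by simp
  qed
  define K where "K = 3*fS + lamS + hS + hS + hC + 3*fC + hC + lamC"
  have bnd: "\<bar>a t\<bar> + \<bar>b t\<bar> + \<bar>c t\<bar> + \<bar>d t\<bar> \<le> K" for t
  proof -
    have bx: "0 < sb t" "sb t < S" "0 < cr t" "cr t < 1 - S"
      using box(1)[of t] box(2)[of t] box(3)[of t] box(4)[of t] .
    have p1: "fS * sb t \<le> fS * S" using less_imp_le[OF box(2)[of t]] assms(3) by (intro mult_left_mono) auto
    have p1': "0 \<le> fS * sb t" using bx assms by simp
    have p2: "fS * S \<le> fS" using assms by simp
    have p3: "hS * cr t \<le> hS" using bx assms by (simp add: mult_le_cancel_left1)
    have p3': "0 \<le> hS * cr t" using bx assms by simp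
    have p4: "hS * sb t \<le> hS" using bx assms by (simp add: mult_le_cancel_left1)
    have p4': "0 \<le> hS * sb t" using bx assms by simp
    have p5: "hC * cr t \<le> hC" using bx assms by (simp add: mult_le_cancel_left1)
    have p5': "0 \<le> hC * cr t" using bx assms by simp
    have p6: "hC * sb t \<le> hC" using bx assms by (simp add: mult_le_cancel_left1)
    have p6': "0 \<le> hC * sb t" using bx assms by simp
    have p7: "fC * cr t \<le> fC" using bx assms by (simp add: mult_le_cancel_left1)
    have p7': "0 \<le> fC * cr t" using bx assms by simp
    have p8: "fC * S \<le> fC" "0 \<le> fC * S" "0 \<le> fS * S" using assms by auto
    have ea: "a t = fS * S - 2 * (fS * sb t) - lamS - hS * cr t"
      unfolding a_def using assms by (simp add: algebra_simps)
    have eb: "\<bar>b t\<bar> = hS * sb t" unfolding b_def using p4' by simp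
    have ec: "\<bar>c t\<bar> = hC * cr t" unfolding c_def using p5' by simp
    have ed: "d t = fC - fC * S - 2 * (fC * cr t) - hC * sb t - lamC"
      unfolding d_def using assms by (simp add: algebra_simps)
    have "\<bar>a t\<bar> \<le> 3*fS + lamS + hS" unfolding ea using p1 p1' p2 p3 p3' p8 assms by linarith
    moreover have "\<bar>d t\<bar> \<le> 3*fC + hC + lamC" unfolding ed using p6 p6' p7 p7' p8 assms by linarith
    ultimately show ?thesis unfolding K_def using eb ec p4 p5 by linarith
  qed
  define w where "w t = (u t)\<^sup>2 + (v t)\<^sup>2" for t
  have Dw: "\<And>t. (w has_real_derivative 2 * (a t * (u t)\<^sup>2 + (b t + c t) * u t * v t + d t * (v t)\<^sup>2)) (at t)"
  proof -
    fix t
    have "(w has_real_derivative (2 * u t * (a t * u t + b t * v t) + 2 * v t * (c t * u t + d t * v t))) (at t)"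
      unfolding w_def[abs_def] by (auto intro!: derivative_eq_intros Du Dv)
    moreover have "2 * u t * (a t * u t + b t * v t) + 2 * v t * (c t * u t + d t * v t)
      = 2 * (a t * (u t)\<^sup>2 + (b t + c t) * u t * v t + d t * (v t)\<^sup>2)"
      by (simp add: algebra_simps power2_eq_square)
    ultimately show "(w has_real_derivative 2 * (a t * (u t)\<^sup>2 + (b t + c t) * u t * v t + d t * (v t)\<^sup>2)) (at t)"
      by simp
  qed
  have NZ: "u t \<noteq> 0 \<or> v t \<noteq> 0" for t
  proof (rule ccontr)
    assume "\<not> (u t \<noteq> 0 \<or> v t \<noteq> 0)"
    then have wt: "w t = 0" unfolding w_def by simp
    have B: "\<bar>2 * (a s * (u s)\<^sup>2 + (b s + c s) * u s * v s + d s * (v s)\<^sup>2)\<bar> \<le> (2 * K) * w s" for s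
      using quad_bound[OF bnd[of s], of "u s" "v s"] unfolding w_def by simp
    have P: "0 \<le> w s" for s unfolding w_def by simp
    have w0: "w s = 0" for s by (rule gronwall_zero[OF Dw B P wt])
    then have "u s = 0" "v s = 0" for s unfolding w_def
      by (simp_all add: add_nonneg_eq_0_iff)
    then have "\<forall>s. (sb has_real_derivative 0) (at s)" "\<forall>s. (cr has_real_derivative 0) (at s)"
      using Dx Dy by metis+
    then have "sb t1' = sb t2'" "cr t1' = cr t2'" by (metis DERIV_isconst_all)+
    then show False using nc by simp
  qed
  define p where "p t = u t * v t" for t
  have Dp: "\<And>t. (p has_real_derivative ((a t * u t + b t * v t) * v t + u t * (c t * u t + d t * v t))) (at t)"
    unfolding p_def[abs_def] by (auto intro!: derivative_eq_intros Du Dv)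
  have Np: "(a t * u t + b t * v t) * v t + u t * (c t * u t + d t * v t) < 0" if "p t = 0" for t
  proof -
    have bn: "b t < 0" "c t < 0" using box assms unfolding b_def c_def by auto
    from that have "u t = 0 \<or> v t = 0" unfolding p_def by simp
    then show ?thesis
    proof
      assume u0: "u t = 0"
      then have "v t \<noteq> 0" using NZ by auto
      then have "0 < (v t)\<^sup>2" by simp
      then have "b t * (v t)\<^sup>2 < 0" using bn by (simp add: mult_neg_pos)
      then show ?thesis using u0 by (simp add: power2_eq_square mult.assoc)
    next
      assume v0: "v t = 0"
      then have "u t \<noteq> 0" using NZ by auto
      then have "0 < (u t)\<^sup>2" by simp
      then have "c t * (u t)\<^sup>2 < 0" using bn by (simp add: mult_neg_pos)
      then show ?thesis using v0 by (simp add: power2_eq_square mult.assoc mult.left_commute)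
    qed
  qed
  obtain t1 where "0 < t1" "t1 < T" "u t1 = 0"
    using rolle_zero[of 0 T sb u] T Dx by (metis add_0)
  then have pt1: "p t1 = 0" unfolding p_def by simp
  obtain dd where dd: "dd > 0" "\<And>h. h > 0 \<Longrightarrow> h < dd \<Longrightarrow> p t1 > p (t1 + h)"
    using DERIV_neg_dec_right[OF Dp Np[OF pt1]] by blast
  define t0 where "t0 = t1 + dd/2"
  have pt0: "p t0 < 0" using dd(2)[of "dd/2"] dd(1) pt1 unfolding t0_def by simp
  obtain z where z: "t0 < z" "z < t0 + T" "u z = 0"
    using rolle_zero[of t0 "t0 + T" sb u] T Dx by auto
  have "p z < 0" using neg_stays[OF Dp Np pt0 less_imp_le[OF z(1)]] by blast
  then show False using z unfolding p_def by simp
qed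

end
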